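(* Let $\mathcal{A}$ be a central S-ring over a finite group $G$. Then $\mathcal{A}$ is primitive if and only if its rational closure $\mathrm{tr}(\mathcal{A})$ is primitive.
   Context: For a finite group $G$ with identity $e$ and $X\subseteq G$, write $\underline{X}=\sum_{x\in X}x\in\mathbb{Z}G$. A subring $\mathcal{A}$ of $\mathbb{Z}G$ is an S-ring over $G$ if there is a partition $\mathcal{S}(\mathcal{A})$ of $G$ (basic sets) such that $\{e\}\in\mathcal{S}(\mathcal{A})$, $X\in\mathcal{S}(\mathcal{A})\Rightarrow X^{-1}\in\mathcal{S}(\mathcal{A})$, and $\mathcal{A}$ is the $\mathbb{Z}$-span of $\{\underline{X}: X\in\mathcal{S}(\mathcal{A})\}$. An $\mathcal{A}$-subgroup is a subgroup of $G$ that is a union of basic sets; $\mathcal{A}$ is primitive if its only $\mathcal{A}$-subgroups are $\{e\}$ and $G$. $\mathcal{A}$ is central if $\mathcal{A}\subseteq\mathcal{Z}(\mathbb{Z}G)$. For an integer $m$, $X^{(m)}=\{x^m:x\in X\}$; the trace of $X$ is $\mathrm{tr}(X)=\bigcup_{\gcd(m,|G|)=1}X^{(m)}$. The rational closure of a central S-ring $\mathcal{A}$ is $\mathrm{tr}(\mathcal{A})=\mathrm{Span}_{\mathbb{Z}}\{\underline{\mathrm{tr}(X)}: X\in\mathcal{S}(\mathcal{A})\}$, which is a central S-ring over $G$ with basic sets $\mathrm{tr}(X)$, $X\in\mathcal{S}(\mathcal{A})$. *)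

theory Defs
  imports "HOL-Algebra.Algebra"
begin

text \<open>The integral group ring ZG of a finite group G is modelled as integer-valued
  functions on the carrier (zero outside the carrier); multiplication is convolution.\<close>

definition gr_mult :: "('a, 'b) monoid_scheme \<Rightarrow> ('a \<Rightarrow> int) \<Rightarrow> ('a \<Rightarrow> int) \<Rightarrow> ('a \<Rightarrow> int)" where
  "gr_mult G f h = (\<lambda>g. if g \<in> carrier G
      then (\<Sum>x\<in>carrier G. f x * h (inv\<^bsub>G\<^esub> x \<otimes>\<^bsub>G\<^esub> g)) else 0)"

definition group_ring :: "('a, 'b) monoid_scheme \<Rightarrow> ('a \<Rightarrow> int) set" where
  "group_ring G = {f. \<forall>g. g \<notin> carrier G \<longrightarrow> f g = 0}"

definition setsum_elt :: "'a set \<Rightarrow> ('a \<Rightarrow> int)" where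
  "setsum_elt A = (\<lambda>y. if y \<in> A then 1 else 0)"

definition span_basic :: "'a set set \<Rightarrow> ('a \<Rightarrow> int) set" where
  "span_basic S = {f. \<exists>a :: 'a set \<Rightarrow> int. f = (\<lambda>g. \<Sum>B\<in>S. a B * setsum_elt B g)}"

definition is_partition_of :: "'a set set \<Rightarrow> 'a set \<Rightarrow> bool" where
  "is_partition_of S A \<longleftrightarrow> (\<forall>B\<in>S. B \<noteq> {} \<and> B \<subseteq> A)
      \<and> (\<forall>B\<in>S. \<forall>C\<in>S. B \<noteq> C \<longrightarrow> B \<inter> C = {}) \<and> \<Union>S = A"

text \<open>An S-ring over G, given by its partition S of basic sets; the ring itself is
  the Z-span of the B-bar, required to be a subring of ZG.\<close>
definition S_ring :: "('a, 'b) monoid_scheme \<Rightarrow> 'a set set \<Rightarrow> bool" where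
  "S_ring G S \<longleftrightarrow> is_partition_of S (carrier G)
     \<and> {\<one>\<^bsub>G\<^esub>} \<in> S
     \<and> (\<forall>B\<in>S. (\<lambda>x. inv\<^bsub>G\<^esub> x) ` B \<in> S)
     \<and> (\<forall>f\<in>span_basic S. \<forall>h\<in>span_basic S. gr_mult G f h \<in> span_basic S)"

definition central_S_ring :: "('a, 'b) monoid_scheme \<Rightarrow> 'a set set \<Rightarrow> bool" where
  "central_S_ring G S \<longleftrightarrow> S_ring G S
     \<and> (\<forall>f\<in>span_basic S. \<forall>h\<in>group_ring G. gr_mult G f h = gr_mult G h f)"

definition S_subgroup :: "('a, 'b) monoid_scheme \<Rightarrow> 'a set set \<Rightarrow> 'a set \<Rightarrow> bool" where
  "S_subgroup G S H \<longleftrightarrow> subgroup H G \<and> (\<exists>T\<subseteq>S. H = \<Union>T)"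

definition S_primitive :: "('a, 'b) monoid_scheme \<Rightarrow> 'a set set \<Rightarrow> bool" where
  "S_primitive G S \<longleftrightarrow> (\<forall>H. S_subgroup G S H \<longrightarrow> H = {\<one>\<^bsub>G\<^esub>} \<or> H = carrier G)"

definition set_pow :: "('a, 'b) monoid_scheme \<Rightarrow> 'a set \<Rightarrow> int \<Rightarrow> 'a set" where
  "set_pow G B m = (\<lambda>x. x [^]\<^bsub>G\<^esub> m) ` B"

definition trace :: "('a, 'b) monoid_scheme \<Rightarrow> 'a set \<Rightarrow> 'a set" where
  "trace G B = (\<Union>m\<in>{m::int. coprime m (int (order G))}. set_pow G B m)"

definition rational_closure :: "('a, 'b) monoid_scheme \<Rightarrow> 'a set set \<Rightarrow> 'a set set" where
  "rational_closure G S = trace G ` S"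

end

theory Submission
  imports Defs
begin

definition pset :: "('a, 'b) monoid_scheme \<Rightarrow> 'a set \<Rightarrow> 'a set \<Rightarrow> 'a set" where
  "pset G Y Z = {x \<otimes>\<^bsub>G\<^esub> y | x y. x \<in> Y \<and> y \<in> Z}"

definition sclosed :: "('a, 'b) monoid_scheme \<Rightarrow> 'a set set \<Rightarrow> 'a set \<Rightarrow> bool" where
  "sclosed G S Y \<longleftrightarrow> Y \<subseteq> carrier G \<and> (\<forall>B\<in>S. B \<inter> Y \<noteq> {} \<longrightarrow> B \<subseteq> Y)"

lemma part_finite:
  assumes "is_partition_of S A" "finite A" shows "finite S"
proof -
  have "S \<subseteq> Pow A" using assms(1) unfolding is_partition_of_def by auto
  thus ?thesis using assms(2) finite_subset by blast
qed

lemma span_val: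
  assumes "is_partition_of S A" "finite S" "B0 \<in> S" "g \<in> B0"
  shows "(\<Sum>B\<in>S. a B * setsum_elt B g) = a B0"
proof -
  have "(\<Sum>B\<in>S. a B * setsum_elt B g) = (\<Sum>B\<in>S. if B = B0 then a B0 else 0)"
  proof (rule sum.cong)
    fix B assume "B \<in> S"
    show "a B * setsum_elt B g = (if B = B0 then a B0 else 0)"
    proof (cases "B = B0")
      case False
      then have "B \<inter> B0 = {}" using assms \<open>B \<in> S\<close> unfolding is_partition_of_def by blast
      then show ?thesis using False assms(4) by (auto simp: setsum_elt_def)
    qed (use assms(4) in \<open>auto simp: setsum_elt_def\<close>)
  qed simp
  also have "\<dots> = a B0" using assms(2,3) by simp
  finally show ?thesis .
qed

lemma span_const:
  assumes "is_partition_of S A" "finite S" "f \<in> span_basic S" "B0 \<in> S" "g \<in> B0" "g' \<in> B0"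
  shows "f g = f g'"
proof -
  obtain a where a: "f = (\<lambda>g. \<Sum>B\<in>S. a B * setsum_elt B g)" using assms(3) unfolding span_basic_def by blast
  show ?thesis unfolding a using span_val[OF assms(1,2,4,5)] span_val[OF assms(1,2,4,6)] by simp
qed

lemma closed_in_span:
  assumes "is_partition_of S (carrier G)" "finite S" "sclosed G S Y"
  shows "setsum_elt Y \<in> span_basic S"
proof -
  define a where "a B = (if B \<subseteq> Y then 1 else 0 :: int)" for B
  have "setsum_elt Y g = (\<Sum>B\<in>S. a B * setsum_elt B g)" for g
  proof (cases "g \<in> carrier G")
    case True
    then obtain B0 where B0: "B0 \<in> S" "g \<in> B0" using assms(1) unfolding is_partition_of_def by blast
    have "(\<Sum>B\<in>S. a B * setsum_elt B g) = a B0" using span_val[OF assms(1,2) B0] .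
    moreover have "B0 \<subseteq> Y \<longleftrightarrow> g \<in> Y" using assms(3) B0 unfolding sclosed_def by blast
    ultimately show ?thesis by (simp add: a_def setsum_elt_def)
  next
    case False
    have "g \<notin> B" if "B \<in> S" for B using assms(1) that False unfolding is_partition_of_def by blast
    moreover have "g \<notin> Y" using assms(3) False unfolding sclosed_def by blast
    ultimately show ?thesis by (simp add: setsum_elt_def)
  qed
  thus ?thesis unfolding span_basic_def by blast
qed

lemma gr_mult_pos:
  assumes "group G" "finite (carrier G)" "Y \<subseteq> carrier G" "Z \<subseteq> carrier G" "g \<in> carrier G"
  shows "gr_mult G (setsum_elt Y) (setsum_elt Z) g \<noteq> 0 \<longleftrightarrow> g \<in> pset G Y Z"
proof -
  interpret group G by fact
  have "gr_mult G (setsum_elt Y) (setsum_elt Z) g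
      = (\<Sum>x\<in>carrier G. setsum_elt Y x * setsum_elt Z (inv\<^bsub>G\<^esub> x \<otimes>\<^bsub>G\<^esub> g))"
    using assms(5) by (simp add: gr_mult_def)
  also have "\<dots> \<noteq> 0 \<longleftrightarrow> (\<exists>x\<in>carrier G. setsum_elt Y x * setsum_elt Z (inv\<^bsub>G\<^esub> x \<otimes>\<^bsub>G\<^esub> g) \<noteq> 0)"
    using sum_nonneg_eq_0_iff[OF assms(2), of "\<lambda>x. setsum_elt Y x * setsum_elt Z (inv\<^bsub>G\<^esub> x \<otimes>\<^bsub>G\<^esub> g)"]
    by (auto simp: setsum_elt_def)
  also have "\<dots> \<longleftrightarrow> (\<exists>x\<in>Y. inv\<^bsub>G\<^esub> x \<otimes>\<^bsub>G\<^esub> g \<in> Z)"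
    using assms(3) by (auto simp: setsum_elt_def)
  also have "\<dots> \<longleftrightarrow> g \<in> pset G Y Z"
  proof
    assume "\<exists>x\<in>Y. inv\<^bsub>G\<^esub> x \<otimes>\<^bsub>G\<^esub> g \<in> Z"
    then obtain x where x: "x \<in> Y" "inv\<^bsub>G\<^esub> x \<otimes>\<^bsub>G\<^esub> g \<in> Z" by blast
    have "g = x \<otimes>\<^bsub>G\<^esub> (inv\<^bsub>G\<^esub> x \<otimes>\<^bsub>G\<^esub> g)" using x assms(3,5)
      by (metis inv_solve_left m_closed inv_closed subsetD)
    thus "g \<in> pset G Y Z" using x unfolding pset_def by blast
  next
    assume "g \<in> pset G Y Z"
    then obtain x y where "x \<in> Y" "y \<in> Z" "g = x \<otimes>\<^bsub>G\<^esub> y" unfolding pset_def by blast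
    thus "\<exists>x\<in>Y. inv\<^bsub>G\<^esub> x \<otimes>\<^bsub>G\<^esub> g \<in> Z" using assms(3,4)
      by (metis inv_solve_left m_closed inv_closed subsetD)
  qed
  finally show ?thesis .
qed

lemma pset_closed:
  assumes "group G" "finite (carrier G)" "S_ring G S" "sclosed G S Y" "sclosed G S Z"
  shows "sclosed G S (pset G Y Z)"
proof -
  interpret group G by fact
  have P: "is_partition_of S (carrier G)" using assms(3) unfolding S_ring_def by blast
  have fS: "finite S" using part_finite[OF P assms(2)] .
  have YZ: "Y \<subseteq> carrier G" "Z \<subseteq> carrier G" using assms(4,5) unfolding sclosed_def by auto
  have sub: "pset G Y Z \<subseteq> carrier G" using YZ unfolding pset_def by auto
  have inspan: "gr_mult G (setsum_elt Y) (setsum_elt Z) \<in> span_basic S"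
    using assms(3) closed_in_span[OF P fS assms(4)] closed_in_span[OF P fS assms(5)]
    unfolding S_ring_def by blast
  have "B \<subseteq> pset G Y Z" if B: "B \<in> S" "B \<inter> pset G Y Z \<noteq> {}" for B
  proof
    fix g' assume g': "g' \<in> B"
    obtain g where g: "g \<in> B" "g \<in> pset G Y Z" using B by blast
    have Bc: "B \<subseteq> carrier G" using P B unfolding is_partition_of_def by blast
    have "gr_mult G (setsum_elt Y) (setsum_elt Z) g \<noteq> 0"
      using gr_mult_pos[OF assms(1,2) YZ] g Bc by blast
    moreover have "gr_mult G (setsum_elt Y) (setsum_elt Z) g = gr_mult G (setsum_elt Y) (setsum_elt Z) g'"
      using span_const[OF P fS inspan B(1) g(1) g'] .
    ultimately show "g' \<in> pset G Y Z" using gr_mult_pos[OF assms(1,2) YZ] g' Bc by auto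
  qed
  thus ?thesis using sub unfolding sclosed_def by blast
qed

lemma pset_memI: "a \<in> Y \<Longrightarrow> x \<in> Z \<Longrightarrow> a \<otimes>\<^bsub>G\<^esub> x \<in> pset G Y Z"
  unfolding pset_def by blast

primrec ppow :: "('a, 'b) monoid_scheme \<Rightarrow> 'a set \<Rightarrow> nat \<Rightarrow> 'a set" where
  "ppow M W 0 = {one M}"
| "ppow M W (Suc n) = pset M (ppow M W n) W"

lemma ppow_closed:
  assumes "group G" "finite (carrier G)" "S_ring G S" "W \<in> S"
  shows "sclosed G S (ppow G W n)"
proof (induction n)
  have P: "is_partition_of S (carrier G)" and O: "{\<one>\<^bsub>G\<^esub>} \<in> S"
    using assms(3) unfolding S_ring_def by auto
  have D: "\<forall>B\<in>S. \<forall>C\<in>S. B \<noteq> C \<longrightarrow> B \<inter> C = {}" using P unfolding is_partition_of_def by auto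
  case 0
  have "B \<subseteq> {\<one>\<^bsub>G\<^esub>}" if B: "B \<in> S" "B \<inter> {\<one>\<^bsub>G\<^esub>} \<noteq> {}" for B
  proof (rule ccontr)
    assume "\<not> B \<subseteq> {\<one>\<^bsub>G\<^esub>}"
    hence "B \<noteq> {\<one>\<^bsub>G\<^esub>}" by auto
    hence "B \<inter> {\<one>\<^bsub>G\<^esub>} = {}" using D B(1) O by simp
    thus False using B(2) by simp
  qed
  then show ?case using monoid.one_closed[OF group.is_monoid[OF assms(1)]] unfolding sclosed_def
    by simp
next
  case (Suc n)
  have P: "is_partition_of S (carrier G)" using assms(3) unfolding S_ring_def by auto
  have "W \<subseteq> carrier G" using P assms(4) unfolding is_partition_of_def by auto
  moreover have "B \<subseteq> W" if B: "B \<in> S" "B \<inter> W \<noteq> {}" for B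
  proof (rule ccontr)
    assume "\<not> B \<subseteq> W"
    hence "B \<noteq> W" by auto
    hence "B \<inter> W = {}" using P B(1) assms(4) unfolding is_partition_of_def by simp
    thus False using B(2) by simp
  qed
  ultimately have "sclosed G S W" unfolding sclosed_def by blast
  then show ?case using pset_closed[OF assms(1,2,3) Suc] by simp
qed

lemma (in group) ppow_sub':
  assumes "W \<subseteq> carrier G" shows "ppow G W n \<subseteq> carrier G"
proof (induction n)
  case 0 show ?case by simp
next
  case (Suc n)
  show ?case
  proof
    fix z assume "z \<in> ppow G W (Suc n)"
    then obtain a x where "a \<in> ppow G W n" "x \<in> W" "z = a \<otimes> x" by (auto simp: pset_def)
    thus "z \<in> carrier G" using Suc assms by blast
  qed
qed

lemma ppow_sub:
  assumes "group G" "W \<subseteq> carrier G" shows "ppow G W n \<subseteq> carrier G"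
  using group.ppow_sub'[OF assms] .

lemma (in group) ppow_add':
  assumes "W \<subseteq> carrier G" "a \<in> ppow G W m" "b \<in> ppow G W n"
  shows "a \<otimes> b \<in> ppow G W (m + n)"
  using assms(3)
proof (induction n arbitrary: b)
  case 0
  have "a \<in> carrier G" using ppow_sub'[OF assms(1)] assms(2) by blast
  then show ?case using 0 assms(2) by simp
next
  case (Suc n)
  then obtain c x where c: "c \<in> ppow G W n" "x \<in> W" "b = c \<otimes> x" by (auto simp: pset_def)
  have ac: "a \<otimes> c \<in> ppow G W (m + n)" using Suc.IH c(1) by blast
  have "a \<in> carrier G" "c \<in> carrier G" "x \<in> carrier G"
    using ppow_sub'[OF assms(1)] assms c by blast+
  hence "a \<otimes> b = (a \<otimes> c) \<otimes> x" using c(3) by (simp add: m_assoc)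
  thus ?case using pset_memI[OF ac c(2)] by simp
qed

lemma ppow_add:
  assumes "group G" "W \<subseteq> carrier G" "a \<in> ppow G W m" "b \<in> ppow G W n"
  shows "a \<otimes>\<^bsub>G\<^esub> b \<in> ppow G W (m + n)"
  using group.ppow_add'[OF assms] .

lemma (in group) ppow_pow':
  assumes "W \<subseteq> carrier G" "x \<in> W" shows "x [^] n \<in> ppow G W n"
proof (induction n)
  case 0 then show ?case by simp
next
  case (Suc n) then show ?case using pset_memI[OF Suc assms(2)] by simp
qed

lemma ppow_pow:
  assumes "group G" "W \<subseteq> carrier G" "x \<in> W" shows "x [^]\<^bsub>G\<^esub> n \<in> ppow G W n"
  using group.ppow_pow'[OF assms] .

lemma ppow_in_subgroup:
  assumes "subgroup H G" "W \<subseteq> H" shows "ppow G W n \<subseteq> H"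
proof (induction n)
  case 0 show ?case using subgroup.one_closed[OF assms(1)] by simp
next
  case (Suc n)
  show ?case
  proof
    fix z assume "z \<in> ppow G W (Suc n)"
    then obtain a x where "a \<in> ppow G W n" "x \<in> W" "z = a \<otimes>\<^bsub>G\<^esub> x" by (auto simp: pset_def)
    thus "z \<in> H" using Suc assms subgroup.m_closed[OF assms(1)] by blast
  qed
qed

lemma gen_all:
  assumes "group G" "finite (carrier G)" "S_ring G S" "S_primitive G S" "W \<in> S" "W \<noteq> {\<one>\<^bsub>G\<^esub>}"
    "subgroup H G" "W \<subseteq> H"
  shows "carrier G \<subseteq> H"
proof -
  interpret group G by fact
  have P: "is_partition_of S (carrier G)" using assms(3) unfolding S_ring_def by auto
  have Xc: "W \<subseteq> carrier G" "W \<noteq> {}" using P assms(5) unfolding is_partition_of_def by auto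
  define U where "U = (\<Union>n. ppow G W n)"
  have Uc: "U \<subseteq> carrier G" using ppow_sub[OF assms(1) Xc(1)] unfolding U_def by blast
  have Umult: "a \<otimes>\<^bsub>G\<^esub> b \<in> U" if ab: "a \<in> U" "b \<in> U" for a b
  proof -
    obtain m where m: "a \<in> ppow G W m" using ab(1) unfolding U_def by blast
    obtain n where n: "b \<in> ppow G W n" using ab(2) unfolding U_def by blast
    show ?thesis using ppow_add[OF assms(1) Xc(1) m n] unfolding U_def by blast
  qed
  have U1: "\<one>\<^bsub>G\<^esub> \<in> U" unfolding U_def using ppow.simps(1)[of G W] by blast
  have Upow: "a [^]\<^bsub>G\<^esub> (n::nat) \<in> U" if "a \<in> U" for a n
  proof (induction n)
    case 0 then show ?case using U1 by simp
  next
    case (Suc n) then show ?case using Umult[OF _ that] by simp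
  qed
  have Uinv: "inv\<^bsub>G\<^esub> a \<in> U" if a: "a \<in> U" for a
  proof -
    have ac: "a \<in> carrier G" using a Uc by blast
    have k: "ord a \<ge> 1" using ord_ge_1[OF assms(2) ac] .
    have e: "Suc (ord a - 1) = ord a" using k by simp
    have "a [^]\<^bsub>G\<^esub> (ord a - 1) \<otimes>\<^bsub>G\<^esub> a = a [^]\<^bsub>G\<^esub> Suc (ord a - 1)"
      by (simp only: nat_pow_Suc)
    also have "\<dots> = \<one>\<^bsub>G\<^esub>" unfolding e using pow_ord_eq_1[OF ac] .
    finally have "inv\<^bsub>G\<^esub> a = a [^]\<^bsub>G\<^esub> (ord a - 1)"
      using inv_equality[OF _ ac nat_pow_closed[OF ac]] by blast
    thus ?thesis using Upow[OF a] by simp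
  qed
  have "subgroup U G"
    by (rule subgroup.intro) (use Uc Umult U1 Uinv in auto)
  moreover have "U = \<Union>{B\<in>S. B \<subseteq> U}"
  proof
    show "U \<subseteq> \<Union>{B\<in>S. B \<subseteq> U}"
    proof
      fix u assume u: "u \<in> U"
      then obtain n where n: "u \<in> ppow G W n" unfolding U_def by blast
      have "\<Union>S = carrier G" using P unfolding is_partition_of_def by blast
      hence "u \<in> \<Union>S" using u Uc by blast
      then obtain B where B: "B \<in> S" "u \<in> B" by blast
      have cl: "\<forall>B\<in>S. B \<inter> ppow G W n \<noteq> {} \<longrightarrow> B \<subseteq> ppow G W n"
        using ppow_closed[OF assms(1,2,3,5), of n] unfolding sclosed_def by blast
      have "B \<inter> ppow G W n \<noteq> {}" using B n by blast
      hence "B \<subseteq> ppow G W n" using cl B(1) by blast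
      hence "B \<subseteq> U" unfolding U_def by blast
      thus "u \<in> \<Union>{B\<in>S. B \<subseteq> U}" using B by blast
    qed
  qed blast
  ultimately have "S_subgroup G S U" unfolding S_subgroup_def by blast
  hence "U = {\<one>\<^bsub>G\<^esub>} \<or> U = carrier G" using assms(4) unfolding S_primitive_def by blast
  moreover have "W \<subseteq> U"
  proof
    fix x assume x: "x \<in> W"
    have "x [^]\<^bsub>G\<^esub> (1::nat) \<in> ppow G W 1" using ppow_pow[OF assms(1) Xc(1) x] .
    moreover have "x [^]\<^bsub>G\<^esub> (1::nat) = x" using x Xc(1) by auto
    ultimately have "x \<in> ppow G W 1" by simp
    thus "x \<in> U" unfolding U_def by blast
  qed
  moreover have "\<not> W \<subseteq> {\<one>\<^bsub>G\<^esub>}" using Xc(2) assms(6) by blast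
  ultimately have "U = carrier G" by blast
  moreover have "U \<subseteq> H" using ppow_in_subgroup[OF assms(7,8)] unfolding U_def by blast
  ultimately show ?thesis by blast
qed

lemma sub_trace:
  assumes "group G" "W \<subseteq> carrier G" shows "W \<subseteq> trace G W"
proof
  fix x assume "x \<in> W"
  hence "x = x [^]\<^bsub>G\<^esub> (1::int)" using assms group.int_pow_1[OF assms(1)] by auto
  moreover have "(1::int) \<in> {m::int. coprime m (int (order G))}" by simp
  ultimately show "x \<in> trace G W" unfolding trace_def set_pow_def using \<open>x \<in> W\<close> by blast
qed

lemma trace_sub:
  assumes "group G" "subgroup H G" "W \<subseteq> H" shows "trace G W \<subseteq> H"
  using assms group.subgroup_int_pow_closed[OF assms(1,2)]
  unfolding trace_def set_pow_def by blast

lemma trace_one: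
  assumes "group G" shows "trace G {\<one>\<^bsub>G\<^esub>} = {\<one>\<^bsub>G\<^esub>}"
  using assms unfolding trace_def set_pow_def
  by (auto simp: group.int_pow_one intro!: exI[of _ 1])

theorem proposition3p2:
  fixes G :: "('a, 'b) monoid_scheme" and S :: "'a set set"
  assumes "group G" and "finite (carrier G)"
    and "central_S_ring G S"
  shows "S_primitive G S \<longleftrightarrow> S_primitive G (rational_closure G S)"
proof
  have SR: "S_ring G S" using assms(3) unfolding central_S_ring_def by blast
  have P: "is_partition_of S (carrier G)" using SR unfolding S_ring_def by auto
  interpret group G by fact
  show "S_primitive G (rational_closure G S)" if prim: "S_primitive G S"
    unfolding S_primitive_def
  proof (intro allI impI)
    fix H assume "S_subgroup G (rational_closure G S) H"
    then obtain T where H: "subgroup H G" "T \<subseteq> trace G ` S" "H = \<Union>T"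
      unfolding S_subgroup_def rational_closure_def by blast
    show "H = {\<one>\<^bsub>G\<^esub>} \<or> H = carrier G"
    proof (rule ccontr)
      assume c: "\<not> (H = {\<one>\<^bsub>G\<^esub>} \<or> H = carrier G)"
      have one: "\<one>\<^bsub>G\<^esub> \<in> H" using subgroup.one_closed[OF H(1)] .
      have "\<not> H \<subseteq> {\<one>\<^bsub>G\<^esub>}"
      proof
        assume "H \<subseteq> {\<one>\<^bsub>G\<^esub>}"
        hence "H = {\<one>\<^bsub>G\<^esub>}" using one by auto
        thus False using c by simp
      qed
      then obtain y where y: "y \<in> H" "y \<noteq> \<one>\<^bsub>G\<^esub>" by auto
      then obtain t where t: "t \<in> T" "y \<in> t" using H(3) by auto
      then obtain W where W0: "W \<in> S" "t = trace G W" using H(2) by auto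
      have W: "W \<in> S" "trace G W \<in> T" "y \<in> trace G W" using W0 t by auto
      have Xc: "W \<subseteq> carrier G" using P W(1) unfolding is_partition_of_def by auto
      have XH: "W \<subseteq> H" using sub_trace[OF assms(1) Xc] W(2) H(3) by blast
      have "W \<noteq> {\<one>\<^bsub>G\<^esub>}" using W(3) y(2) trace_one[OF assms(1)] by auto
      hence "carrier G \<subseteq> H" using gen_all[OF assms(1,2) SR prim W(1) _ H(1) XH] by blast
      hence "H = carrier G" using subgroup.subset[OF H(1)] by (rule equalityI[rotated])
      thus False using c by simp
    qed
  qed
  show "S_primitive G S" if prim: "S_primitive G (rational_closure G S)"
    unfolding S_primitive_def
  proof (intro allI impI)
    fix H assume "S_subgroup G S H"
    then obtain T where H: "subgroup H G" "T \<subseteq> S" "H = \<Union>T"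
      unfolding S_subgroup_def by blast
    have "H = \<Union>(trace G ` T)"
    proof
      show "H \<subseteq> \<Union>(trace G ` T)"
      proof
        fix h assume "h \<in> H"
        then obtain B where B: "B \<in> T" "h \<in> B" using H(3) by auto
        have "B \<subseteq> carrier G" using P B(1) H(2) unfolding is_partition_of_def by auto
        hence "h \<in> trace G B" using sub_trace[OF assms(1)] B(2) by blast
        thus "h \<in> \<Union>(trace G ` T)" using B(1) by blast
      qed
      show "\<Union>(trace G ` T) \<subseteq> H"
      proof
        fix h assume "h \<in> \<Union>(trace G ` T)"
        then obtain B where B: "B \<in> T" "h \<in> trace G B" by auto
        have "B \<subseteq> H" using H(3) B(1) by auto
        thus "h \<in> H" using trace_sub[OF assms(1) H(1)] B(2) by blast
      qed
    qed
    moreover have "trace G ` T \<subseteq> trace G ` S" using H(2) by auto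
    ultimately have "S_subgroup G (rational_closure G S) H"
      unfolding S_subgroup_def rational_closure_def using H(1) by blast
    thus "H = {\<one>\<^bsub>G\<^esub>} \<or> H = carrier G" using prim unfolding S_primitive_def by blast
  qed
qed

end
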